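(* Let $r>0$ and let $B_r=\{F\in CBV(I):\|F\|_{BV}\leq r\}$. Then there exist a subinterval $J\subseteq\mathbb{R}$ and an uncountable family $\{F_h\in CBV(I):h\in J\}$ such that: $F_h\in B_r$ for each $h\in J$; $F_h(0)=F_h(1)=0$ for each $h\in J$; and $\|F_{h_1}-F_{h_2}\|_{BV}=2r$ for any distinct $h_1,h_2\in J$.
   Context: $I=[0,1]$. $CBV(I)$ is the space of continuous real functions $F$ on $I$ of bounded variation, i.e. with $V(F)=\sup\sum_{i=1}^m|F(x_i)-F(x_{i-1})|<\infty$, the supremum over partitions $0=x_0<\dots<x_m=1$; it is normed by $\|F\|_{BV}=|F(0)|+V(F)$. *)

theory Defs
  imports "HOL-Analysis.Analysis"
begin

text \<open>Functions on I = [0,1] are represented as real \<Rightarrow> real; only values on [0,1] matter.\<close>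

definition is_partition :: "real list \<Rightarrow> bool" where
  "is_partition xs \<longleftrightarrow> length xs \<ge> 2 \<and> hd xs = 0 \<and> last xs = 1 \<and> sorted_wrt (<) xs"

definition var_sums :: "(real \<Rightarrow> real) \<Rightarrow> real set" where
  "var_sums F = {(\<Sum>i<length xs - 1. \<bar>F (xs ! (i+1)) - F (xs ! i)\<bar>) | xs. is_partition xs}"

definition variation :: "(real \<Rightarrow> real) \<Rightarrow> real" where
  "variation F = Sup (var_sums F)"

definition CBV :: "(real \<Rightarrow> real) set" where
  "CBV = {F. continuous_on {0..1} F \<and> bdd_above (var_sums F)}"

definition bv_norm :: "(real \<Rightarrow> real) \<Rightarrow> real" where
  "bv_norm F = \<bar>F 0\<bar> + variation F"

definition BV_ball :: "real \<Rightarrow> (real \<Rightarrow> real) set" where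
  "BV_ball r = {F \<in> CBV. bv_norm F \<le> r}"

end

theory Submission
  imports Defs
begin


primrec pref :: "(nat \<Rightarrow> int) \<Rightarrow> nat \<Rightarrow> int" where
  "pref a 0 = 0"
| "pref a (Suc n) = 6 * pref a n + a n"

definition val :: "(nat \<Rightarrow> int) \<Rightarrow> real" where
  "val a = (\<Sum>l. of_int (a l) / 6 ^ Suc l)"

lemma geo6: "(\<lambda>i. (B::real) / 6 ^ Suc i) sums (B / 5)"
proof -
  have "(\<lambda>i. (B/6) * (1/6) ^ i) sums ((B/6) * (1 / (1 - 1/6)))"
    by (intro sums_mult geometric_sums) simp
  moreover have "(\<lambda>i. (B/6) * (1/6) ^ i) = (\<lambda>i. (B::real) / 6 ^ Suc i)"
    by (auto simp: power_divide field_simps)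
  ultimately show ?thesis by simp
qed

lemma val_sums:
  assumes "\<And>l. 0 \<le> a l" "\<And>l. a l \<le> B"
  shows "(\<lambda>l. of_int (a l) / 6 ^ Suc l) sums val a"
proof -
  have "summable (\<lambda>l. of_int (a l) / (6::real) ^ Suc l)"
  proof (rule summable_comparison_test)
    show "\<exists>N. \<forall>n\<ge>N. norm (of_int (a n) / (6::real) ^ Suc n) \<le> of_int B / 6 ^ Suc n"
      using assms by (auto intro!: divide_right_mono)
    show "summable (\<lambda>n. of_int B / (6::real) ^ Suc n)" using geo6 by (rule sums_summable)
  qed
  then show ?thesis unfolding val_def by (rule summable_sums)
qed

lemma pref_sum: "(\<Sum>l<n. of_int (a l) / (6::real) ^ Suc l) = of_int (pref a n) / 6 ^ n"
  by (induction n) (auto simp: field_simps)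

lemma pref_cong: "(\<And>l. l < n \<Longrightarrow> a l = b l) \<Longrightarrow> pref a n = pref b n"
  by (induction n) auto

lemma val_bounds:
  assumes "\<And>l. 0 \<le> a l" "\<And>l. a l \<le> B"
  shows "of_int (pref a n) \<le> 6 ^ n * val a" "6 ^ n * val a \<le> of_int (pref a n) + of_int B / 5"
proof -
  define g where "g i = of_int (a (i + n)) / (6::real) ^ Suc i" for i
  have gs: "summable g"
  proof (rule summable_comparison_test)
    show "\<exists>N. \<forall>k\<ge>N. norm (g k) \<le> of_int B / 6 ^ Suc k"
      using assms by (auto simp: g_def intro!: divide_right_mono)
    show "summable (\<lambda>n. of_int B / (6::real) ^ Suc n)" using geo6 by (rule sums_summable)
  qed
  have g0: "0 \<le> suminf g" using gs assms by (intro suminf_nonneg) (auto simp: g_def)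
  have g1: "suminf g \<le> of_int B / 5"
  proof -
    have "suminf g \<le> (\<Sum>i. of_int B / (6::real) ^ Suc i)"
      using gs assms geo6[of "of_int B"] by (intro suminf_le) (auto simp: g_def sums_iff intro!: divide_right_mono)
    also have "\<dots> = of_int B / 5" using geo6[of "of_int B"] by (simp add: sums_iff)
    finally show ?thesis .
  qed
  have "(\<lambda>l. of_int (a l) / (6::real) ^ Suc l) sums val a" by (rule val_sums[OF assms])
  then have "(\<lambda>i. of_int (a (i + n)) / (6::real) ^ Suc (i + n)) sums (val a - of_int (pref a n) / 6 ^ n)"
  proof -
    have "val a - of_int (pref a n) / 6 ^ n + (\<Sum>i<n. of_int (a i) / (6::real) ^ Suc i) = val a"
      by (simp only: pref_sum)
    with \<open>(\<lambda>l. of_int (a l) / (6::real) ^ Suc l) sums val a\<close> show ?thesis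
      by (subst sums_iff_shift) (simp only:)
  qed
  moreover have "(\<lambda>i. of_int (a (i + n)) / (6::real) ^ Suc (i + n)) = (\<lambda>i. g i / 6 ^ n)"
    by (auto simp: g_def power_add field_simps)
  moreover have "(\<lambda>i. g i / 6 ^ n) sums (suminf g / 6 ^ n)"
    using gs by (intro sums_divide summable_sums)
  ultimately have eq: "val a - of_int (pref a n) / 6 ^ n = suminf g / 6 ^ n"
    using sums_unique2 by metis
  then have "6 ^ n * val a = of_int (pref a n) + suminf g"
    by (simp add: field_simps)
  then show "of_int (pref a n) \<le> 6 ^ n * val a" "6 ^ n * val a \<le> of_int (pref a n) + of_int B / 5"
    using g0 g1 by auto
qed

lemma val_lin:
  assumes "\<And>l. 0 \<le> a l" "\<And>l. a l \<le> 1" "\<And>l. 0 \<le> b l" "\<And>l. b l \<le> 1"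
  shows "val (\<lambda>l. a l + 3 * b l) = val a + 3 * val b"
proof -
  have "(\<lambda>l. of_int (a l) / (6::real) ^ Suc l + 3 * (of_int (b l) / 6 ^ Suc l)) sums (val a + 3 * val b)"
    by (intro sums_add sums_mult val_sums[of _ 1]) (use assms in auto)
  moreover have "(\<lambda>l. of_int (a l + 3 * b l) / (6::real) ^ Suc l) sums val (\<lambda>l. a l + 3 * b l)"
    by (rule val_sums[of _ 4]) (smt (verit) assms)+
  ultimately show ?thesis by (simp add: add_divide_distrib sums_iff)
qed



definition bitr :: "nat \<Rightarrow> real \<Rightarrow> int" where
  "bitr j x = \<lfloor>2 ^ Suc j * x\<rfloor> mod 2"

definition psi :: "real \<Rightarrow> real" where
  "psi x = val (\<lambda>l. bitr l x)"

lemma bitr_01: "0 \<le> bitr j x" "bitr j x \<le> 1"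
  by (auto simp: bitr_def)

lemma floor_step: "\<lfloor>2 ^ Suc j * x\<rfloor> = 2 * \<lfloor>2 ^ j * x\<rfloor> + bitr j x"
proof -
  define y where "y = 2 ^ j * x"
  have e: "2 ^ Suc j * x = 2 * y" by (simp add: y_def)
  have "\<lfloor>2*y\<rfloor> = 2 * \<lfloor>y\<rfloor> \<or> \<lfloor>2*y\<rfloor> = 2 * \<lfloor>y\<rfloor> + 1"
  proof (cases "y < of_int \<lfloor>y\<rfloor> + 1/2")
    case True
    then have "\<lfloor>2*y\<rfloor> = 2 * \<lfloor>y\<rfloor>" by (intro floor_unique) (use floor_correct[of y] in linarith)+
    then show ?thesis by simp
  next
    case False
    then have "\<lfloor>2*y\<rfloor> = 2 * \<lfloor>y\<rfloor> + 1" by (intro floor_unique) (use floor_correct[of y] in linarith)+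
    then show ?thesis by simp
  qed
  then show ?thesis unfolding bitr_def e y_def[symmetric] by auto
qed

lemma psi_bounds: "0 \<le> psi x" "psi x \<le> 1/5"
  using val_bounds[of "\<lambda>l. bitr l x" 1 0] bitr_01 by (auto simp: psi_def)

lemma psi_0: "psi 0 = 0"
  by (simp add: psi_def bitr_def val_def)

lemma psi_strict:
  assumes "0 \<le> x" "x < y" "y < 1"
  shows "psi x < psi y"
proof -
  define fl where "fl n (z::real) = \<lfloor>2 ^ n * z\<rfloor>" for n z
  have flmono: "fl n x \<le> fl n y" for n
    unfolding fl_def using assms by (intro floor_mono mult_left_mono) auto
  obtain n where n: "1 < 2 ^ n * (y - x)"
    using real_arch_pow[of 2 "1 / (y - x)"] assms by (auto simp: field_simps)
  have "fl n x \<noteq> fl n y"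
  proof -
    have "of_int (fl n x) \<le> 2 ^ n * x" unfolding fl_def by simp
    also have "\<dots> < 2 ^ n * y - 1" using n by (simp add: algebra_simps)
    also have "\<dots> < of_int (fl n y)" unfolding fl_def by linarith
    finally show ?thesis by auto
  qed
  define n0 where "n0 = (LEAST n. fl n x \<noteq> fl n y)"
  have n0: "fl n0 x \<noteq> fl n0 y" unfolding n0_def using \<open>fl n x \<noteq> fl n y\<close> by (rule LeastI)
  have below: "m < n0 \<Longrightarrow> fl m x = fl m y" for m unfolding n0_def using not_less_Least by blast
  have "fl 0 x = 0" "fl 0 y = 0" using assms by (simp_all add: fl_def floor_eq_iff)
  then obtain j where j: "n0 = Suc j" using n0 by (cases n0) auto
  have bits_eq: "bitr l x = bitr l y" if "l < j" for l
    using below[of "Suc l"] that j by (simp add: bitr_def fl_def)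
  have "fl (Suc j) x < fl (Suc j) y" using n0 flmono[of "Suc j"] j by auto
  moreover have "fl j x = fl j y" using below[of j] j by simp
  ultimately have "bitr j x < bitr j y" using floor_step[of j x] floor_step[of j y] by (simp add: fl_def)
  then have bj: "bitr j x = 0" "bitr j y = 1" using bitr_01[of j x] bitr_01[of j y] by auto
  have pe: "pref (\<lambda>l. bitr l x) j = pref (\<lambda>l. bitr l y) j" by (rule pref_cong) (rule bits_eq)
  have pS: "pref (\<lambda>l. bitr l y) (Suc j) = pref (\<lambda>l. bitr l x) (Suc j) + 1"
    using pe bj by simp
  have "6 ^ Suc j * psi x \<le> of_int (pref (\<lambda>l. bitr l x) (Suc j)) + 1/5"
    using val_bounds(2)[of "\<lambda>l. bitr l x" 1 "Suc j"] bitr_01 by (simp add: psi_def)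
  also have "\<dots> < of_int (pref (\<lambda>l. bitr l y) (Suc j))" using pS by simp
  also have "\<dots> \<le> 6 ^ Suc j * psi y"
    using val_bounds(1)[of "\<lambda>l. bitr l y" 1 "Suc j"] bitr_01 by (simp add: psi_def)
  finally show ?thesis by simp
qed



definition Sset :: "real \<Rightarrow> real set" where
  "Sset t = insert 0 {w. 0 \<le> w \<and> w < 1 \<and> psi w \<le> t}"

definition Cf :: "real \<Rightarrow> real" where
  "Cf t = Sup (Sset t)"

lemma psi_mono: "0 \<le> x \<Longrightarrow> x \<le> y \<Longrightarrow> y < 1 \<Longrightarrow> psi x \<le> psi y"
  using psi_strict[of x y] by (cases "x = y") auto

lemma Sset_bdd: "bdd_above (Sset t)"
  unfolding Sset_def by (rule bdd_aboveI[of _ 1]) auto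

lemma Cf_ge0: "0 \<le> Cf t"
  unfolding Cf_def by (rule cSup_upper[OF _ Sset_bdd]) (simp add: Sset_def)

lemma Cf_le1: "Cf t \<le> 1"
  unfolding Cf_def by (rule cSup_least) (auto simp: Sset_def)

lemma Cf_mono: "s \<le> t \<Longrightarrow> Cf s \<le> Cf t"
  unfolding Cf_def by (rule cSup_subset_mono[OF _ Sset_bdd]) (auto simp: Sset_def)

lemma Cf_psi: assumes "0 \<le> w" "w < 1" shows "Cf (psi w) = w"
  unfolding Cf_def
proof (rule cSup_eq_maximum)
  show "w \<in> Sset (psi w)" using assms by (simp add: Sset_def)
  show "x \<le> w" if "x \<in> Sset (psi w)" for x
    using that assms psi_strict[of w x] by (auto simp: Sset_def not_le[symmetric])
qed

lemma Cf_neg: assumes "t \<le> 0" shows "Cf t = 0"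
  unfolding Cf_def
proof (rule cSup_eq_maximum)
  show "0 \<in> Sset t" by (simp add: Sset_def)
  show "x \<le> 0" if "x \<in> Sset t" for x
    using that assms psi_strict[of 0 x] psi_0 by (force simp: Sset_def)
qed

lemma Cf_big: assumes "1/5 \<le> t" shows "Cf t = 1"
proof -
  have "Sset t = {0..<1}" using assms psi_bounds(2) by (auto simp: Sset_def) (smt (verit) psi_bounds(2))
  then show ?thesis by (simp add: Cf_def)
qed

lemma Cf_const:
  assumes "a \<le> b" and no: "\<And>w. 0 \<le> w \<Longrightarrow> w < 1 \<Longrightarrow> \<not> (a < psi w \<and> psi w < b)"
  shows "Cf a = Cf b"
proof (rule ccontr)
  assume "Cf a \<noteq> Cf b"
  then have lt: "Cf a < Cf b" using Cf_mono[OF assms(1)] by simp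
  have key: "0 \<le> w \<and> w < 1 \<and> a < psi w \<and> psi w \<le> b" if w: "Cf a < w" "w < Cf b" for w
  proof -
    obtain w' where w': "w' \<in> Sset b" "w < w'"
      using w(2) less_cSup_iff[OF _ Sset_bdd, of b w] by (auto simp: Cf_def Sset_def)
    have w0: "0 < w" using w Cf_ge0[of a] by simp
    then have "0 \<le> w' \<and> w' < 1 \<and> psi w' \<le> b" using w' by (auto simp: Sset_def)
    then have "w < 1" "psi w \<le> b" using w' w0 psi_mono[of w w'] by auto
    moreover have "w \<notin> Sset a"
      using w(1) cSup_upper[OF _ Sset_bdd, of w a] by (auto simp: Cf_def)
    ultimately show ?thesis using w0 by (auto simp: Sset_def)
  qed
  define w1 where "w1 = Cf a + (Cf b - Cf a) / 3"
  define w2 where "w2 = Cf a + 2 * (Cf b - Cf a) / 3"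
  have k1: "0 \<le> w1 \<and> w1 < 1 \<and> a < psi w1 \<and> psi w1 \<le> b" using lt unfolding w1_def by (intro key) (simp_all add: field_simps)
  have k2: "0 \<le> w2 \<and> w2 < 1 \<and> a < psi w2 \<and> psi w2 \<le> b" using lt unfolding w2_def by (intro key) (simp_all add: field_simps)
  have "psi w1 < psi w2" using k1 k2 lt by (intro psi_strict) (auto simp: w1_def w2_def)
  then show False using no[of w1] k1 k2 by auto
qed

lemma Cf_cont: "continuous_on UNIV Cf"
proof -
  define E where "E t = Cf t + min t 0 + max (t - 1) 0" for t
  have "continuous_on UNIV E"
  proof (rule continuous_onI_mono)
    have "E ` UNIV = UNIV"
    proof safe
      fix v :: real
      show "v \<in> range E"
      proof (cases "v < 0")
        case True
        then have "E v = v" using Cf_neg[of v] by (simp add: E_def)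
        then show ?thesis by (metis rangeI)
      next
        case False
        show ?thesis
        proof (cases "v < 1")
          case True
          then have "E (psi v) = v" using False Cf_psi[of v] psi_bounds[of v]
            by (simp add: E_def)
          then show ?thesis by (metis rangeI)
        next
          case False
          then have "E v = v" using Cf_big[of v] by (simp add: E_def)
          then show ?thesis by (metis rangeI)
        qed
      qed
    qed auto
    then show "open (E ` UNIV)" by simp
    show "E x \<le> E y" if "x \<le> y" for x y
      using Cf_mono[OF that] that by (simp add: E_def add_mono)
  qed
  then have "continuous_on UNIV (\<lambda>t. E t - min t 0 - max (t - 1) 0)"
    by (intro continuous_intros) auto
  moreover have "Cf = (\<lambda>t. E t - min t 0 - max (t - 1) 0)" by (auto simp: E_def)
  ultimately show ?thesis by metis
qed



definition Gf :: "real \<Rightarrow> real \<Rightarrow> real" where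
  "Gf h y = Cf (y - 3 * psi h)"

lemma Gf_neg: "y \<le> 0 \<Longrightarrow> Gf h y = 0"
  unfolding Gf_def using psi_bounds(1)[of h] by (intro Cf_neg) auto

lemma Gf_big: "1 \<le> y \<Longrightarrow> Gf h y = 1"
  unfolding Gf_def using psi_bounds(2)[of h] by (intro Cf_big) auto

lemma Gf_mono: "y \<le> z \<Longrightarrow> Gf h y \<le> Gf h z"
  unfolding Gf_def by (intro Cf_mono) auto

lemma Gf_01: "0 \<le> Gf h y" "Gf h y \<le> 1"
  unfolding Gf_def by (rule Cf_ge0, rule Cf_le1)

lemma Gf_cont: "continuous_on UNIV (Gf h)"
proof -
  have "continuous_on UNIV (\<lambda>y. Cf (y - 3 * psi h))"
    by (rule continuous_on_compose2[OF Cf_cont]) (auto intro!: continuous_intros)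
  then show ?thesis by (simp add: Gf_def[abs_def])
qed

lemma G_const:
  assumes "0 \<le> h" "h < 1"
    and k1: "int k mod 6 \<noteq> 3 * bitr i h" and k2: "int k mod 6 \<noteq> 3 * bitr i h + 1"
  shows "Gf h (real (Suc k) / 6 ^ Suc i) = Gf h (real k / 6 ^ Suc i)"
proof -
  define N :: real where "N = 6 ^ Suc i"
  have N0: "0 < N" by (simp add: N_def)
  have "Cf (real k / N - 3 * psi h) = Cf (real (Suc k) / N - 3 * psi h)"
  proof (rule Cf_const)
    show "real k / N - 3 * psi h \<le> real (Suc k) / N - 3 * psi h"
      using N0 by (simp add: divide_right_mono)
    fix w :: real assume w: "0 \<le> w" "w < 1"
    show "\<not> (real k / N - 3 * psi h < psi w \<and> psi w < real (Suc k) / N - 3 * psi h)"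
    proof
      assume as: "real k / N - 3 * psi h < psi w \<and> psi w < real (Suc k) / N - 3 * psi h"
      define A where "A l = bitr l w + 3 * bitr l h" for l
      have A04: "0 \<le> A l" "A l \<le> 4" for l using bitr_01[of l w] bitr_01[of l h] by (auto simp: A_def)
      have vA: "val A = psi w + 3 * psi h"
        unfolding A_def psi_def by (rule val_lin) (auto simp: bitr_01)
      have s1: "real k < N * val A" using as N0 vA by (simp add: field_simps)
      have s2: "N * val A < real k + 1" using as N0 vA by (simp add: field_simps)
      have b1: "of_int (pref A (Suc i)) \<le> N * val A"
        using val_bounds(1)[of A 4 "Suc i"] A04 by (simp add: N_def)
      have b2: "N * val A \<le> of_int (pref A (Suc i)) + 4/5"
        using val_bounds(2)[of A 4 "Suc i"] A04 by (simp add: N_def)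
      have "pref A (Suc i) < int k + 1" using b1 s2 by linarith
      moreover have "int k < pref A (Suc i) + 1" using b2 s1 by linarith
      ultimately have pk: "pref A (Suc i) = int k" by simp
      have "pref A (Suc i) mod 6 = A i" using A04[of i] by simp
      then have "int k mod 6 = A i" using pk by metis
      then have "int k mod 6 = bitr i w + 3 * bitr i h" by (simp add: A_def)
      then show False using k1 k2 bitr_01[of i w] by auto
    qed
  qed
  then show ?thesis by (simp add: Gf_def N_def)
qed

lemma G_sum:
  assumes h: "0 \<le> h" "h < 1" and g: "0 \<le> g" "g < 1" and hg: "h \<noteq> g"
  shows "\<exists>N::nat. 0 < N \<and> (\<Sum>k<N. \<bar>(Gf h (real (Suc k) / N) - Gf h (real k / N)) -
                                   (Gf g (real (Suc k) / N) - Gf g (real k / N))\<bar>) = 2"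
proof -
  have "psi h \<noteq> psi g" using psi_strict[of h g] psi_strict[of g h] h g hg by (cases "h < g") auto
  then obtain i where i: "bitr i h \<noteq> bitr i g" unfolding psi_def by fastforce
  define N :: nat where "N = 6 ^ Suc i"
  have N0: "0 < N" by (simp add: N_def)
  define dh where "dh k = Gf h (real (Suc k) / N) - Gf h (real k / N)" for k
  define dg where "dg k = Gf g (real (Suc k) / N) - Gf g (real k / N)" for k
  have dpos: "0 \<le> dh k" "0 \<le> dg k" for k
    unfolding dh_def dg_def by (auto intro!: Gf_mono divide_right_mono simp: N0)
  have one0: "dh k = 0 \<or> dg k = 0" for k
  proof -
    have "(int k mod 6 \<noteq> 3 * bitr i h \<and> int k mod 6 \<noteq> 3 * bitr i h + 1) \<or>
          (int k mod 6 \<noteq> 3 * bitr i g \<and> int k mod 6 \<noteq> 3 * bitr i g + 1)"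
      using i bitr_01[of i h] bitr_01[of i g] by auto
    then show ?thesis
      using G_const[OF h, of k i] G_const[OF g, of k i] by (auto simp: dh_def dg_def N_def)
  qed
  have "(\<Sum>k<N. \<bar>dh k - dg k\<bar>) = (\<Sum>k<N. dh k + dg k)"
    using one0 dpos by (intro sum.cong) (auto, smt (verit))
  also have "\<dots> = (\<Sum>k<N. dh k) + (\<Sum>k<N. dg k)" by (rule sum.distrib)
  also have "(\<Sum>k<N. dh k) = Gf h (real N / N) - Gf h (real 0 / N)"
    unfolding dh_def by (rule sum_lessThan_telescope[where f = "\<lambda>k. Gf h (real k / N)"])
  also have "(\<Sum>k<N. dg k) = Gf g (real N / N) - Gf g (real 0 / N)"
    unfolding dg_def by (rule sum_lessThan_telescope[where f = "\<lambda>k. Gf g (real k / N)"])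
  finally have "(\<Sum>k<N. \<bar>dh k - dg k\<bar>) = 2" using N0 by (simp add: Gf_big Gf_neg)
  then show ?thesis using N0 unfolding dh_def dg_def by blast
qed



lemma partition_ends:
  assumes "is_partition xs" shows "xs ! 0 = 0" "xs ! (length xs - 1) = 1"
proof -
  have ne: "xs \<noteq> []" using assms by (auto simp: is_partition_def)
  show "xs ! 0 = 0" "xs ! (length xs - 1) = 1"
    using assms last_conv_nth[OF ne] hd_conv_nth[OF ne] by (auto simp: is_partition_def)
qed

lemma partition_nth:
  assumes "is_partition xs" "i < length xs"
  shows "0 \<le> xs ! i" "xs ! i \<le> 1"
proof -
  have s: "sorted_wrt (<) xs" and l: "length xs \<ge> 2" and h: "hd xs = 0" and la: "last xs = 1"
    using assms(1) by (auto simp: is_partition_def)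
  have e: "xs ! 0 = 0" "xs ! (length xs - 1) = 1" using partition_ends[OF assms(1)] by auto
  have m: "xs ! a \<le> xs ! b" if "a \<le> b" "b < length xs" for a b
  proof (cases "a = b")
    case False
    then show ?thesis using sorted_wrt_nth_less[OF s, of a b] that by simp
  qed simp
  show "0 \<le> xs ! i" using m[of 0 i] e assms(2) by simp
  show "xs ! i \<le> 1" using m[of i "length xs - 1"] e assms(2) by simp
qed

lemma var_sum_le:
  assumes T: "\<And>x y. 0 \<le> x \<Longrightarrow> x \<le> y \<Longrightarrow> y \<le> 1 \<Longrightarrow> \<bar>F y - F x\<bar> \<le> T y - T x"
    and "s \<in> var_sums F"
  shows "s \<le> T 1 - T 0"
proof -
  obtain xs where xs: "is_partition xs" and s: "s = (\<Sum>i<length xs - 1. \<bar>F (xs ! (i+1)) - F (xs ! i)\<bar>)"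
    using assms(2) by (auto simp: var_sums_def)
  have l: "length xs \<ge> 2" and srt: "sorted_wrt (<) xs" using xs by (auto simp: is_partition_def)
  have "s \<le> (\<Sum>i<length xs - 1. T (xs ! Suc i) - T (xs ! i))"
    unfolding s
  proof (rule sum_mono)
    fix i assume i: "i \<in> {..<length xs - 1}"
    have si: "Suc i < length xs" using i by auto
    then have "xs ! i < xs ! Suc i" using sorted_wrt_nth_less[OF srt, of i "Suc i"] by simp
    then show "\<bar>F (xs ! (i+1)) - F (xs ! i)\<bar> \<le> T (xs ! Suc i) - T (xs ! i)"
      using si T[of "xs ! i" "xs ! Suc i"] partition_nth[OF xs, of i] partition_nth[OF xs, of "Suc i"]
        sorted_wrt_nth_less[OF srt, of i "Suc i"] i by auto
  qed
  also have "\<dots> = T (xs ! (length xs - 1)) - T (xs ! 0)"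
    by (rule sum_lessThan_telescope)
  also have "\<dots> = T 1 - T 0" using partition_ends[OF xs] by simp
  finally show ?thesis .
qed

lemma partition01: "is_partition [0,1]" by (simp add: is_partition_def)

lemma var_sums_ne: "var_sums F \<noteq> {}"
  unfolding var_sums_def using partition01 by blast

lemma variation_le:
  assumes T: "\<And>x y. 0 \<le> x \<Longrightarrow> x \<le> y \<Longrightarrow> y \<le> 1 \<Longrightarrow> \<bar>F y - F x\<bar> \<le> T y - T x"
  shows "bdd_above (var_sums F)" "variation F \<le> T 1 - T 0"
  using var_sum_le[OF T] var_sums_ne unfolding variation_def
  by (auto intro!: cSup_least bdd_aboveI)

definition Ff :: "real \<Rightarrow> real \<Rightarrow> real \<Rightarrow> real" where
  "Ff r h x = r / 2 * (Gf h (2 * x) - Gf h (2 * x - 1))"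

definition Tf :: "real \<Rightarrow> real \<Rightarrow> real \<Rightarrow> real" where
  "Tf r h x = (if x \<le> 1/2 then Ff r h x else r - Ff r h x)"

lemma Ff_bounds: assumes "0 < r" shows "0 \<le> Ff r h x" "Ff r h x \<le> r / 2"
proof -
  have "Gf h (2 * x - 1) \<le> Gf h (2 * x)" by (rule Gf_mono) simp
  moreover have "Gf h (2 * x) - Gf h (2 * x - 1) \<le> 1" using Gf_01[of h] by (smt (verit))
  ultimately show "0 \<le> Ff r h x" "Ff r h x \<le> r / 2" using assms
    by (auto simp: Ff_def mult_le_cancel_left1 intro!: mult_nonneg_nonneg)
qed

lemma Ff_T: assumes "0 < r" "0 \<le> x" "x \<le> y" "y \<le> 1"
  shows "\<bar>Ff r h y - Ff r h x\<bar> \<le> Tf r h y - Tf r h x"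
proof (cases "y \<le> 1/2")
  case True
  then have "Ff r h x \<le> Ff r h y" using assms Gf_neg
    by (auto simp: Ff_def intro!: mult_left_mono Gf_mono)
  then show ?thesis using True assms by (simp add: Tf_def)
next
  case y: False
  show ?thesis
  proof (cases "x \<le> 1/2")
    case True
    then show ?thesis using y Ff_bounds[OF assms(1), of h x] Ff_bounds[OF assms(1), of h y]
      by (simp add: Tf_def)
  next
    case False
    then have "Ff r h y \<le> Ff r h x" using assms y Gf_big
      by (auto simp: Ff_def intro!: mult_left_mono Gf_mono)
    then show ?thesis using False y assms by (simp add: Tf_def)
  qed
qed

lemma Ff_0: "Ff r h 0 = 0" by (simp add: Ff_def Gf_neg)
lemma Ff_1: "Ff r h 1 = 0" by (simp add: Ff_def Gf_big)

lemma Ff_cont: "continuous_on {0..1} (Ff r h)"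
proof -
  have "continuous_on UNIV (\<lambda>x. r / 2 * (Gf h (2 * x) - Gf h (2 * x - 1)))"
    by (intro continuous_intros continuous_on_compose2[OF Gf_cont]) auto
  then show ?thesis unfolding Ff_def[abs_def] by (rule continuous_on_subset) auto
qed



lemma sum_split_add: fixes t :: "nat \<Rightarrow> 'a::comm_monoid_add" and n :: nat shows "(\<Sum>i<m + n. t i) = (\<Sum>i<m. t i) + (\<Sum>k<n. t (m + k))"
  by (induction n) (auto simp: add.assoc)

lemma Ff_grid1: assumes "0 < N" "k \<le> N"
  shows "Ff r h (real k / real (2 * N)) = r / 2 * Gf h (real k / real N)"
proof -
  have a: "2 * (real k / real (2 * N)) = real k / real N" using assms by simp
  have "real k / real N \<le> 1" using assms by simp
  then have "2 * (real k / real (2 * N)) - 1 \<le> 0" using a by simp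
  then show ?thesis unfolding Ff_def a[symmetric] by (simp add: Gf_neg)
qed

lemma Ff_grid2: assumes "0 < N"
  shows "Ff r h (real (N + k) / real (2 * N)) = r / 2 * (1 - Gf h (real k / real N))"
proof -
  have a: "2 * (real (N + k) / real (2 * N)) = 1 + real k / real N" using assms by (simp add: field_simps)
  have "Gf h (2 * (real (N + k) / real (2 * N))) = 1" unfolding a by (rule Gf_big) simp
  moreover have "2 * (real (N + k) / real (2 * N)) - 1 = real k / real N" unfolding a by simp
  ultimately show ?thesis unfolding Ff_def by simp
qed

theorem mainTheorem6:
  fixes r :: real
  assumes "r > 0"
  shows "\<exists>J :: real set. is_interval J \<and> uncountable J \<and>
    (\<exists>F :: real \<Rightarrow> real \<Rightarrow> real.
       (\<forall>h\<in>J. F h \<in> CBV \<and> F h \<in> BV_ball r \<and> F h 0 = 0 \<and> F h 1 = 0) \<and>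
       (\<forall>h1\<in>J. \<forall>h2\<in>J. h1 \<noteq> h2 \<longrightarrow> bv_norm (\<lambda>x. F h1 x - F h2 x) = 2 * r))"
proof (intro exI conjI)
  show "is_interval {0<..<1::real}" by simp
  show "uncountable {0<..<1::real}" by (simp add: uncountable_open_interval)
  have TT: "\<And>h x y. 0 \<le> x \<Longrightarrow> x \<le> y \<Longrightarrow> y \<le> 1 \<Longrightarrow> \<bar>Ff r h y - Ff r h x\<bar> \<le> Tf r h y - Tf r h x"
    using Ff_T[OF assms] by blast
  have T01: "Tf r h 1 - Tf r h 0 = r" for h by (simp add: Tf_def Ff_0 Ff_1)
  show "\<forall>h\<in>{0<..<1}. Ff r h \<in> CBV \<and> Ff r h \<in> BV_ball r \<and> Ff r h 0 = 0 \<and> Ff r h 1 = 0"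
  proof
    fix h :: real
    have c: "Ff r h \<in> CBV" using Ff_cont variation_le(1)[where F="Ff r h" and T="Tf r h", OF TT] by (simp add: CBV_def)
    moreover have "bv_norm (Ff r h) \<le> r"
      using variation_le(2)[where F="Ff r h" and T="Tf r h", OF TT] T01[of h] by (simp add: bv_norm_def Ff_0)
    ultimately show "Ff r h \<in> CBV \<and> Ff r h \<in> BV_ball r \<and> Ff r h 0 = 0 \<and> Ff r h 1 = 0"
      by (simp add: BV_ball_def Ff_0 Ff_1)
  qed
  show "\<forall>h1\<in>{0<..<1}. \<forall>h2\<in>{0<..<1}. h1 \<noteq> h2 \<longrightarrow> bv_norm (\<lambda>x. Ff r h1 x - Ff r h2 x) = 2 * r"
  proof (intro ballI impI)
    fix h1 h2 :: real assume h1: "h1 \<in> {0<..<1}" and h2: "h2 \<in> {0<..<1}" and ne: "h1 \<noteq> h2"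
    define D where "D x = Ff r h1 x - Ff r h2 x" for x
    have TD: "\<bar>D y - D x\<bar> \<le> (Tf r h1 y + Tf r h2 y) - (Tf r h1 x + Tf r h2 x)"
      if "0 \<le> x" "x \<le> y" "y \<le> 1" for x y
      using TT[OF that, of h1] TT[OF that, of h2] unfolding D_def by linarith
    have vb: "bdd_above (var_sums D)" and vle: "variation D \<le> 2 * r"
      using variation_le[of D "\<lambda>x. Tf r h1 x + Tf r h2 x", OF TD] T01[of h1] T01[of h2] by auto
    obtain N :: nat where N0: "0 < N" and
      Ns: "(\<Sum>k<N. \<bar>(Gf h1 (real (Suc k) / N) - Gf h1 (real k / N)) -
                    (Gf h2 (real (Suc k) / N) - Gf h2 (real k / N))\<bar>) = 2"
      using G_sum[of h1 h2] h1 h2 ne by auto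
    define xs where "xs = map (\<lambda>k. real k / real (2 * N)) [0..<2 * N + 1]"
    have lxs: "length xs = 2 * N + 1" by (simp add: xs_def)
    have nth: "i < 2 * N + 1 \<Longrightarrow> xs ! i = real i / real (2 * N)" for i
      by (simp add: xs_def nth_map del: upt_Suc)
    have part: "is_partition xs"
      unfolding is_partition_def
    proof (intro conjI)
      show "2 \<le> length xs" using lxs N0 by simp
      show "hd xs = 0" using nth[of 0] lxs hd_conv_nth[of xs] by fastforce
      show "last xs = 1" using nth[of "2 * N"] lxs N0 last_conv_nth[of xs] by fastforce
      show "sorted_wrt (<) xs" unfolding xs_def sorted_wrt_map
        by (rule sorted_wrt_mono_rel[OF _ sorted_wrt_upt]) (use N0 in \<open>auto intro: divide_strict_right_mono\<close>)
    qed
    define t where "t i = \<bar>D (real (Suc i) / real (2 * N)) - D (real i / real (2 * N))\<bar>" for i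
    define u where "u k = \<bar>(Gf h1 (real (Suc k) / N) - Gf h1 (real k / N)) -
                    (Gf h2 (real (Suc k) / N) - Gf h2 (real k / N))\<bar>" for k
    have s_eq: "(\<Sum>i<length xs - 1. \<bar>D (xs ! (i+1)) - D (xs ! i)\<bar>) = (\<Sum>i<N + N. t i)"
    proof -
      have "length xs - 1 = N + N" using lxs by simp
      moreover have "\<bar>D (xs ! (i+1)) - D (xs ! i)\<bar> = t i" if "i < N + N" for i
      proof -
        have "xs ! (i+1) = real (Suc i) / real (2 * N)" using that nth[of "Suc i"] by simp
        moreover have "xs ! i = real i / real (2 * N)" using that nth[of i] by simp
        ultimately show ?thesis by (simp only: t_def)
      qed
      ultimately show ?thesis by (intro sum.cong) auto
    qed
    have ar: "\<bar>r / 2 * a1 - r / 2 * b1 - (r / 2 * a2 - r / 2 * b2)\<bar> = r / 2 * \<bar>(a1 - a2) - (b1 - b2)\<bar>"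
      for a1 a2 b1 b2 :: real
    proof -
      have "r / 2 * a1 - r / 2 * b1 - (r / 2 * a2 - r / 2 * b2) = r / 2 * ((a1 - a2) - (b1 - b2))"
        by (simp add: algebra_simps)
      moreover have "\<bar>r / 2 * ((a1 - a2) - (b1 - b2))\<bar> = r / 2 * \<bar>(a1 - a2) - (b1 - b2)\<bar>"
        using assms by (simp add: abs_mult)
      ultimately show ?thesis by (simp only:)
    qed
    have t1: "t k = r / 2 * u k" if "k < N" for k
    proof -
      have "Suc k \<le> N" "k \<le> N" using that by auto
      note g = Ff_grid1[OF N0 this(1), of r h1] Ff_grid1[OF N0 this(1), of r h2]
               Ff_grid1[OF N0 this(2), of r h1] Ff_grid1[OF N0 this(2), of r h2]
      show ?thesis unfolding t_def D_def g u_def by (rule ar)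
    qed
    have t2: "t (N + k) = r / 2 * u k" for k
    proof -
      have e: "Suc (N + k) = N + Suc k" by simp
      have "t (N + k) = \<bar>Ff r h1 (real (N + Suc k) / real (2 * N)) - Ff r h2 (real (N + Suc k) / real (2 * N))
            - (Ff r h1 (real (N + k) / real (2 * N)) - Ff r h2 (real (N + k) / real (2 * N)))\<bar>"
        unfolding t_def D_def e ..
      also have "\<dots> = \<bar>r / 2 * (1 - Gf h1 (real (Suc k) / real N)) - r / 2 * (1 - Gf h2 (real (Suc k) / real N))
            - (r / 2 * (1 - Gf h1 (real k / real N)) - r / 2 * (1 - Gf h2 (real k / real N)))\<bar>"
        by (simp only: Ff_grid2[OF N0])
      also have "\<dots> = r / 2 * u k" unfolding ar u_def by (simp add: algebra_simps abs_minus_commute)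
      finally show ?thesis .
    qed
    have "(\<Sum>i<N + N. t i) = (\<Sum>k<N. r / 2 * u k) + (\<Sum>k<N. r / 2 * u k)"
    proof -
      have "(\<Sum>k<N. t k) = (\<Sum>k<N. r / 2 * u k)" by (rule sum.cong) (simp_all only: t1 lessThan_iff)
      moreover have "(\<Sum>k<N. t (N + k)) = (\<Sum>k<N. r / 2 * u k)" by (simp only: t2)
      ultimately show ?thesis by (simp only: sum_split_add)
    qed
    also have "\<dots> = 2 * (r / 2 * (\<Sum>k<N. u k))" by (simp only: sum_distrib_left[symmetric])
    also have "\<dots> = 2 * r" using Ns unfolding u_def by simp
    finally have "2 * r \<in> var_sums D"
      unfolding var_sums_def using part s_eq by (auto intro!: exI[of _ xs])
    then have "2 * r \<le> variation D" unfolding variation_def using vb by (rule cSup_upper)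
    then have "variation D = 2 * r" using vle by simp
    then show "bv_norm (\<lambda>x. Ff r h1 x - Ff r h2 x) = 2 * r"
      using D_def[abs_def] by (simp add: bv_norm_def Ff_0)
  qed
qed

end
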